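(* Let $\mathfrak{h}=\mathfrak{b}\oplus\mathfrak{c}\oplus\mathfrak{r}\oplus\mathfrak{z}$ be an orthogonal direct sum with $\mathfrak{b}$ a subspace of $\mathfrak{a}$, $\mathfrak{c}$ a complex subspace of $\mathfrak{g}_\alpha$, $\mathfrak{r}$ a totally real subspace of $\mathfrak{g}_\alpha$, and $\mathfrak{z}$ a subspace of $\mathfrak{g}_{2\alpha}$ with $[\mathfrak{c},\mathfrak{c}]\subset\mathfrak{z}$. Let $H$ be the connected Lie subgroup of $AN$ with Lie algebra $\mathfrak{h}$. Then each orbit of $H$ on $\mathbb{C}H^n$ can be written as $H\cdot\operatorname{Exp}(X)(o)$ for some $X\in(\mathfrak{a}\oplus\mathfrak{n})\ominus\mathfrak{h}$.
   Context: $\mathbb{C}H^n$ is the complex hyperbolic space of constant holomorphic sectional curvature $-1$; $G=SU(1,n)$, $o\in\mathbb{C}H^n$ fixed with stabilizer $K$, Cartan decomposition $\mathfrak{g}=\mathfrak{k}\oplus\mathfrak{p}$, $\mathfrak{a}\subset\mathfrak{p}$ maximal abelian ($1$-dimensional), restricted roots $\pm\alpha,\pm2\alpha$ with $\alpha,2\alpha$ positive, root spaces $\mathfrak{g}_\lambda$, $\mathfrak{n}=\mathfrak{g}_\alpha\oplus\mathfrak{g}_{2\alpha}$, and $AN$ the connected subgroup with Lie algebra $\mathfrak{a}\oplus\mathfrak{n}$, which acts simply transitively on $\mathbb{C}H^n$. $\mathfrak{a}\oplus\mathfrak{n}$ carries an inner product and complex structure $J$ (with $J\mathfrak{g}_\alpha=\mathfrak{g}_\alpha$,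 $J\mathfrak{a}=\mathfrak{g}_{2\alpha}$) making $AN$ with its left-invariant metric holomorphically isometric to $\mathbb{C}H^n$. The bracket on $\mathfrak{g}_\alpha$ is $[U,V]=\langle JU,V\rangle Z$ with $Z\in\mathfrak{g}_{2\alpha}$. $\operatorname{Exp}$ is the Lie exponential of $AN$; $\ominus$ is orthogonal complement. A subspace $W$ is complex if $JW\subset W$, totally real if $JW\perp W$. *)

theory Defs
  imports "HOL-Analysis.Analysis"
begin

text \<open>Concrete model of the solvable Iwasawa group AN of SU(1,n), n = CARD('m) + 1.
  Lie algebra a + n = a + g_alpha + g_2alpha is modelled as real \<times> complex^'m \<times> real:
  (t, U, x) stands for t B + U + x Z, with B a unit vector spanning a, Z = J B a unit
  vector spanning g_2alpha, g_alpha = complex^'m with J = multiplication by i and the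
  real inner product Re (sum u_k cnj v_k).  Normalisation alpha(B) = 1/2.\<close>

type_synonym ('m) alg = "real \<times> (complex ^ 'm) \<times> real"

definition Jv :: "complex ^ 'm::finite \<Rightarrow> complex ^ 'm" where
  "Jv U = (\<chi> k. \<i> * U $ k)"

definition J :: "'m::finite alg \<Rightarrow> 'm::finite alg" where
  "J X = (case X of (t, U, x) \<Rightarrow> (- x, Jv U, t))"

definition a_sp :: "'m::finite alg set" where "a_sp = {(t, 0, 0) | t. True}"
definition g_alpha :: "'m::finite alg set" where "g_alpha = {(0, U, 0) | U. True}"
definition g_2alpha :: "'m::finite alg set" where "g_2alpha = {(0, 0, x) | x. True}"

text \<open>Lie bracket: [B,U] = U/2, [B,Z] = Z, [U,V] = <JU,V> Z.\<close>
definition bracket :: "'m::finite alg \<Rightarrow> 'm::finite alg \<Rightarrow> 'm::finite alg" where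
  "bracket X Y = (case X of (t, U, x) \<Rightarrow> case Y of (s, V, y) \<Rightarrow>
     (0, (t / 2) *\<^sub>R V - (s / 2) *\<^sub>R U, inner (Jv U) V + t * y - s * x))"

text \<open>The group AN: (t, U, x) stands for Exp(tB) * Exp_N(U + xZ).
  Multiplication (t,n)(s,m) = (t+s, Ad(Exp(-sB)) n * m), with the Heisenberg
  law (U,x)*(V,y) = (U+V, x+y+<JU,V>/2) in exponential coordinates.\<close>
definition mult :: "'m::finite alg \<Rightarrow> 'm::finite alg \<Rightarrow> 'm::finite alg" where
  "mult g h = (case g of (t, U, x) \<Rightarrow> case h of (s, V, y) \<Rightarrow>
     (t + s, exp (- s / 2) *\<^sub>R U + V,
      exp (- s) * x + y + inner (Jv (exp (- s / 2) *\<^sub>R U)) V / 2))"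

definition unit_el :: "'m::finite alg" where "unit_el = (0, 0, 0)"

text \<open>Lie exponential of AN (time-1 value of the one-parameter subgroup with
  initial velocity X), computed explicitly in the above coordinates.\<close>
definition Exp :: "'m::finite alg \<Rightarrow> 'm::finite alg" where
  "Exp X = (case X of (t, U, x) \<Rightarrow>
     if t = 0 then (0, U, x)
     else (t, ((2 / t) * (1 - exp (- t / 2))) *\<^sub>R U, (x / t) * (1 - exp (- t))))"

text \<open>The connected Lie subgroup with Lie algebra h: the subgroup generated by Exp h
  (finite products of exponentials; inverses are exponentials of -X).\<close>
definition conn_subgroup :: "'m::finite alg set \<Rightarrow> 'm::finite alg set" where
  "conn_subgroup h = {foldr mult (map Exp xs) unit_el | xs. set xs \<subseteq> h}"

definition orbit :: "'m::finite alg set \<Rightarrow> 'm::finite alg \<Rightarrow> 'm::finite alg set" where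
  "orbit H p = {mult g p | g. g \<in> H}"

definition ortho_compl :: "'m::finite alg set \<Rightarrow> 'm::finite alg set" where
  "ortho_compl W = {X. \<forall>Y\<in>W. inner X Y = 0}"

definition complex_sub :: "'m::finite alg set \<Rightarrow> bool" where
  "complex_sub W \<longleftrightarrow> J ` W \<subseteq> W"

definition totally_real :: "'m::finite alg set \<Rightarrow> bool" where
  "totally_real W \<longleftrightarrow> (\<forall>u\<in>W. \<forall>v\<in>W. inner (J u) v = 0)"

end

theory Submission imports Defs begin

lemma mult_simp: "mult (t,U,x) (s,V,y) = (t + s, exp (- s / 2) *\<^sub>R U + V,
      exp (- s) * x + y + inner (Jv (exp (- s / 2) *\<^sub>R U)) V / 2)"
  by (simp add: mult_def)

lemma Jv_add: "Jv (U + V) = Jv U + Jv V"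
  by (simp add: Jv_def vec_eq_iff algebra_simps)
lemma Jv_scale: "Jv (a *\<^sub>R U) = a *\<^sub>R Jv U"
  by (simp add: Jv_def vec_eq_iff scaleR_conv_of_real algebra_simps)
lemma Jv_zero[simp]: "Jv 0 = 0"
  by (simp add: Jv_def vec_eq_iff)
lemma Jv_minus: "Jv (- U) = - Jv U"
  by (simp add: Jv_def vec_eq_iff)
lemma inner_Jv_self[simp]: "inner (Jv U) U = 0"
  unfolding inner_vec_def Jv_def by (simp add: inner_complex_def)

lemma mult_assoc: "mult (mult g h) k = mult g (mult h k)"
proof -
  obtain t U x where g: "g = (t,U,x)" by (cases g) auto
  obtain s V y where h: "h = (s,V,y)" by (cases h) auto
  obtain r W w where k: "k = (r,W,w)" by (cases k) auto
  have e1: "exp (- (s + r) / 2) = exp (- s / 2) * exp (- r / 2)"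
    by (simp add: exp_add[symmetric])
  have e2: "exp (- (s + r)) = exp (- s) * exp (- r)"
    by (simp add: exp_add[symmetric])
  have e3: "exp (- r) = exp (- r / 2) * exp (- r / 2)"
    by (simp add: exp_add[symmetric])
  show ?thesis unfolding g h k mult_simp
    apply (simp only: e1 e2 Jv_add Jv_scale inner_add_left inner_add_right inner_scaleR_left inner_scaleR_right)
    apply (simp add: algebra_simps e3 add_divide_distrib)
    done
qed

lemma mult_unit_left[simp]: "mult unit_el p = p"
  by (cases p) (simp add: unit_el_def mult_simp)
lemma mult_unit_right[simp]: "mult p unit_el = p"
  by (cases p) (simp add: unit_el_def mult_simp)

lemma Exp_simp0: "Exp (0, U, x) = (0, U, x)" by (simp add: Exp_def)
lemma Exp_simp1: "Exp (t, 0, 0) = (t, 0, 0)" by (simp add: Exp_def)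

lemma foldr_gen: "foldr mult (map Exp xs) a = mult (foldr mult (map Exp xs) unit_el) a"
  by (induction xs) (simp_all add: mult_assoc)

lemma foldr_app: "foldr mult (map Exp (xs@ys)) unit_el =
   mult (foldr mult (map Exp xs) unit_el) (foldr mult (map Exp ys) unit_el)"
  using foldr_gen[of xs "foldr mult (map Exp ys) unit_el"] by simp

lemma H_mult: "a \<in> conn_subgroup h \<Longrightarrow> b \<in> conn_subgroup h \<Longrightarrow> mult a b \<in> conn_subgroup h"
  unfolding conn_subgroup_def
proof clarify
  fix xs ys assume "set xs \<subseteq> h" "set ys \<subseteq> h"
  then show "\<exists>zs. mult (foldr mult (map Exp xs) unit_el) (foldr mult (map Exp ys) unit_el) =
     foldr mult (map Exp zs) unit_el \<and> set zs \<subseteq> h"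
    using foldr_app[of xs ys] by (intro exI[of _ "xs @ ys"]) simp
qed

lemma H_Exp: "X \<in> h \<Longrightarrow> Exp X \<in> conn_subgroup h"
  unfolding conn_subgroup_def by (intro CollectI exI[of _ "[X]"]) simp

lemma Exp_inv: "fst X = 0 \<or> snd X = (0,0) \<Longrightarrow> mult (Exp (-X)) (Exp X) = unit_el"
proof -
  assume a: "fst X = 0 \<or> snd X = (0,0)"
  obtain t U x where X: "X = (t,U,x)" by (cases X) auto
  show ?thesis using a unfolding X
    by (auto simp: Exp_simp0 Exp_simp1 mult_simp unit_el_def Jv_minus)
qed

lemma orbit_step:
  assumes "X \<in> h" "-X \<in> h" "fst X = 0 \<or> snd X = (0,0)"
  shows "orbit (conn_subgroup h) (mult (Exp X) p) = orbit (conn_subgroup h) p"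
proof
  show "orbit (conn_subgroup h) (mult (Exp X) p) \<subseteq> orbit (conn_subgroup h) p"
  proof
    fix q assume "q \<in> orbit (conn_subgroup h) (mult (Exp X) p)"
    then obtain g where g: "g \<in> conn_subgroup h" "q = mult g (mult (Exp X) p)" unfolding orbit_def by auto
    then have "q = mult (mult g (Exp X)) p" by (simp add: mult_assoc)
    then show "q \<in> orbit (conn_subgroup h) p"
      unfolding orbit_def using H_mult[OF g(1) H_Exp[OF assms(1)]] by blast
  qed
next
  show "orbit (conn_subgroup h) p \<subseteq> orbit (conn_subgroup h) (mult (Exp X) p)"
  proof
    fix q assume "q \<in> orbit (conn_subgroup h) p"
    then obtain g where g: "g \<in> conn_subgroup h" "q = mult g p" unfolding orbit_def by auto
    have "q = mult g (mult (mult (Exp (-X)) (Exp X)) p)"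
      using g Exp_inv[OF assms(3)] by simp
    also have "\<dots> = mult (mult g (Exp (-X))) (mult (Exp X) p)"
      by (simp add: mult_assoc)
    finally show "q \<in> orbit (conn_subgroup h) (mult (Exp X) p)"
      unfolding orbit_def using H_mult[OF g(1) H_Exp[OF assms(2)]] by blast
  qed
qed

lemma b_cases: assumes "subspace b" "b \<subseteq> a_sp" shows "b = {0} \<or> b = a_sp"
proof (cases "b = {0}")
  case False
  then obtain u where u: "u \<in> b" "u \<noteq> 0" using subspace_0[OF assms(1)] by auto
  then obtain a where ua: "u = (a,0,0)" using assms(2) unfolding a_sp_def by auto
  with u have "a \<noteq> 0" by (simp add: zero_prod_def)
  have "(t,0,0) \<in> b" for t
  proof -
    have "(t / a) *\<^sub>R u \<in> b" using subspace_scale[OF assms(1) u(1)] .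
    then show ?thesis using \<open>a \<noteq> 0\<close> by (simp add: ua)
  qed
  then have "b = a_sp" using assms(2) unfolding a_sp_def by auto
  then show ?thesis by blast
qed simp

lemma z_cases: assumes "subspace b" "b \<subseteq> g_2alpha" shows "b = {0} \<or> b = g_2alpha"
proof (cases "b = {0}")
  case False
  then obtain u where u: "u \<in> b" "u \<noteq> 0" using subspace_0[OF assms(1)] by auto
  then obtain a where ua: "u = (0,0,a)" using assms(2) unfolding g_2alpha_def by auto
  with u have "a \<noteq> 0" by (simp add: zero_prod_def)
  have "(0,0,t) \<in> b" for t
  proof -
    have "(t / a) *\<^sub>R u \<in> b" using subspace_scale[OF assms(1) u(1)] .
    then show ?thesis using \<open>a \<noteq> 0\<close> by (simp add: ua)
  qed
  then have "b = g_2alpha" using assms(2) unfolding g_2alpha_def by auto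
  then show ?thesis by blast
qed simp

lemma Exp_cone: "\<exists>a e. Exp (t, a *\<^sub>R W, e * x) = (t, W, x)"
proof (cases "t = 0")
  case True
  then show ?thesis by (intro exI[of _ 1]) (simp add: Exp_simp0)
next
  case False
  have n1: "1 - exp (- t / 2) \<noteq> 0" using False by simp
  have n2: "1 - exp (- t) \<noteq> 0" using False by simp
  show ?thesis using False n1 n2
    by (intro exI[of _ "1 / ((2 / t) * (1 - exp (- t / 2)))"] exI[of _ "1 / ((1 / t) * (1 - exp (- t)))"])
      (simp add: Exp_def)
qed

lemma exp_half_cancel: "exp (- s / 2) * exp (s / 2) = (1::real)"
  by (simp add: exp_add[symmetric])

theorem lemma3p2:
  fixes b c r z :: "'m::finite alg set"
  assumes "subspace b" "b \<subseteq> a_sp"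
    and "subspace c" "c \<subseteq> g_alpha" "complex_sub c"
    and "subspace r" "r \<subseteq> g_alpha" "totally_real r"
    and "subspace z" "z \<subseteq> g_2alpha"
    and "\<forall>u\<in>b. \<forall>v\<in>c \<union> r \<union> z. inner u v = 0"
    and "\<forall>u\<in>c. \<forall>v\<in>r \<union> z. inner u v = 0"
    and "\<forall>u\<in>r. \<forall>v\<in>z. inner u v = 0"
    and "\<forall>u\<in>c. \<forall>v\<in>c. bracket u v \<in> z"
    and "h = {u + v + w + y | u v w y. u \<in> b \<and> v \<in> c \<and> w \<in> r \<and> y \<in> z}"
  shows "\<forall>p. \<exists>X \<in> ortho_compl h. orbit (conn_subgroup h) p = orbit (conn_subgroup h) (Exp X)"
proof (intro allI)
  fix p :: "'m alg"
  obtain s V y where p: "p = (s,V,y)" by (cases p) auto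
  have h_mem: "\<And>u v w yy. u\<in>b \<Longrightarrow> v\<in>c \<Longrightarrow> w\<in>r \<Longrightarrow> yy\<in>z \<Longrightarrow> u+v+w+yy \<in> h"
    using assms(15) by blast
  have b0: "0 \<in> b" and c0: "0 \<in> c" and r0: "0 \<in> r" and z0: "0 \<in> z"
    using subspace_0 assms(1,3,6,9) by auto
  obtain y' z' where y': "y' \<in> span (c \<union> r)"
    and z': "\<And>w. w \<in> span (c \<union> r) \<Longrightarrow> orthogonal z' w" and dec: "(0,V,0) = y' + z'"
    using orthogonal_subspace_decomp_exists by blast
  have sc: "span c = c" using assms(3) by simp
  have sr: "span r = r" using assms(6) by simp
  have "span (c \<union> r) = {x + y | x y. x \<in> c \<and> y \<in> r}" using span_Un[of c r] sc sr by simp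
  then obtain v w where vw: "v \<in> c" "w \<in> r" "y' = v + w" using y' by blast
  obtain Vv where Vv: "v = (0,Vv,0)" using vw(1) assms(4) unfolding g_alpha_def by auto
  obtain Vw where Vw: "w = (0,Vw,0)" using vw(2) assms(7) unfolding g_alpha_def by auto
  define Y where "Y = Vv + Vw"
  have y'Y: "y' = (0,Y,0)" using vw(3) Vv Vw Y_def by simp
  have z'eq: "z' = (0, V - Y, 0)" using dec y'Y by (cases z') auto
  have orthW: "inner (V - Y) (fst (snd u)) = 0" if uin: "u \<in> c \<union> r" for u
  proof -
    obtain Uu where Uu: "u = (0,Uu,0)" using uin assms(4,7) unfolding g_alpha_def by auto
    have "orthogonal z' u" using z' span_base[OF uin] by blast
    then show ?thesis using Uu z'eq by (simp add: orthogonal_def)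
  qed
  define e where "e = exp (s/2)"
  define X1 where "X1 = (0::real, (-e) *\<^sub>R Y, 0::real)"
  have X1eq: "X1 = 0 + (-e) *\<^sub>R v + (-e) *\<^sub>R w + 0"
    by (simp add: X1_def Vv Vw Y_def scaleR_add_right)
  have X1h: "X1 \<in> h" unfolding X1eq
    by (intro h_mem b0 z0 subspace_scale[OF assms(3) vw(1)] subspace_scale[OF assms(6) vw(2)])
  have mX1eq: "-X1 = 0 + e *\<^sub>R v + e *\<^sub>R w + 0"
    by (simp add: X1_def Vv Vw Y_def scaleR_add_right)
  have mX1h: "-X1 \<in> h" unfolding mX1eq
    by (intro h_mem b0 z0 subspace_scale[OF assms(3) vw(1)] subspace_scale[OF assms(6) vw(2)])
  define p1 where "p1 = mult (Exp X1) p"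
  define y1 where "y1 = snd (snd p1)"
  have p1eq: "p1 = (s, V - Y, y1)"
  proof -
    have "exp (- s / 2) *\<^sub>R ((-e) *\<^sub>R Y) = - Y"
      using exp_half_cancel[of s] by (simp add: e_def)
    then show ?thesis unfolding y1_def p1_def X1_def p Exp_simp0 mult_simp by simp
  qed
  have o1: "orbit (conn_subgroup h) p1 = orbit (conn_subgroup h) p"
    unfolding p1_def by (rule orbit_step[OF X1h mX1h]) (simp add: X1_def)
  define y2 where "y2 = (if z = g_2alpha then 0 else y1)"
  define X2 where "X2 = (if z = g_2alpha then (0::real, 0::complex^'m, - exp s * y1) else 0)"
  have X2z: "X2 \<in> z" "-X2 \<in> z" using z0 by (auto simp: X2_def g_2alpha_def)
  have X2h: "X2 \<in> h" "-X2 \<in> h" using h_mem[OF b0 c0 r0 X2z(1)] h_mem[OF b0 c0 r0 X2z(2)] by auto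
  define p2 where "p2 = mult (Exp X2) p1"
  have p2eq: "p2 = (s, V - Y, y2)"
  proof (cases "z = g_2alpha")
    case True
    have "exp (- s) * (- exp s * y1) = - y1" by (simp add: exp_minus field_simps)
    then show ?thesis using True unfolding p2_def X2_def y2_def p1eq by (simp add: Exp_simp0 mult_simp)
  next
    case False
    then show ?thesis unfolding p2_def X2_def y2_def p1eq
      by (simp add: zero_prod_def Exp_simp0 mult_simp)
  qed
  have o2: "orbit (conn_subgroup h) p2 = orbit (conn_subgroup h) p"
    unfolding p2_def using o1 by (subst orbit_step[OF X2h]) (auto simp: X2_def)
  define t3 where "t3 = (if b = a_sp then 0 else s)"
  define X3 where "X3 = (if b = a_sp then (- s, 0::complex^'m, 0::real) else 0)"
  have X3b: "X3 \<in> b" "-X3 \<in> b" using b0 by (auto simp: X3_def a_sp_def)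
  have X3h: "X3 \<in> h" "-X3 \<in> h" using h_mem[OF X3b(1) c0 r0 z0] h_mem[OF X3b(2) c0 r0 z0] by auto
  define p3 where "p3 = mult (Exp X3) p2"
  have p3eq: "p3 = (t3, V - Y, y2)"
  proof (cases "b = a_sp")
    case True
    then show ?thesis unfolding p3_def X3_def t3_def p2eq by (simp add: Exp_simp1 mult_simp)
  next
    case False
    then show ?thesis unfolding p3_def X3_def t3_def p2eq
      by (simp add: zero_prod_def Exp_simp0 mult_simp)
  qed
  have o3: "orbit (conn_subgroup h) p3 = orbit (conn_subgroup h) p"
    unfolding p3_def using o2 by (subst orbit_step[OF X3h]) (auto simp: X3_def)
  obtain a e' where ae: "Exp (t3, a *\<^sub>R (V - Y), e' * y2) = (t3, V - Y, y2)"
    using Exp_cone by blast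
  define X where "X = (t3, a *\<^sub>R (V - Y), e' * y2)"
  have "X \<in> ortho_compl h"
    unfolding ortho_compl_def
  proof (intro CollectI ballI)
    fix Yv assume "Yv \<in> h"
    then obtain u v w yy where uvw: "u \<in> b" "v \<in> c" "w \<in> r" "yy \<in> z"
      and Yv: "Yv = u + v + w + yy" using assms(15) by blast
    have iu: "inner X u = 0"
      using b_cases[OF assms(1,2)]
    proof
      assume "b = {0}" then show ?thesis using uvw by simp
    next
      assume ba: "b = a_sp"
      then obtain ua where "u = (ua,0,0)" using uvw unfolding a_sp_def by auto
      then show ?thesis using ba by (simp add: X_def t3_def)
    qed
    have iyy: "inner X yy = 0"
      using z_cases[OF assms(9,10)]
    proof
      assume "z = {0}" then show ?thesis using uvw by simp
    next
      assume za: "z = g_2alpha"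
      then obtain ya where "yy = (0,0,ya)" using uvw unfolding g_2alpha_def by auto
      then show ?thesis using za by (simp add: X_def y2_def)
    qed
    have iv: "inner X v = 0" if vin: "v \<in> c \<union> r" for v
    proof -
      obtain Uu where Uu: "v = (0,Uu,0)" using vin assms(4,7) unfolding g_alpha_def by auto
      show ?thesis using orthW[OF vin] Uu by (simp add: X_def)
    qed
    show "inner X Yv = 0" unfolding Yv
      using iu iyy iv[of v] iv[of w] uvw by (simp add: inner_add_right)
  qed
  moreover have "Exp X = p3" using ae p3eq by (simp add: X_def)
  ultimately show "\<exists>X \<in> ortho_compl h. orbit (conn_subgroup h) p = orbit (conn_subgroup h) (Exp X)"
    using o3 by auto
qed

end
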